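(* Let $\lambda>0$, $f:\mathbb{R}^n\to\mathbb{R}$ twice continuously differentiable, $\varphi=f+\lambda\|\cdot\|_1$, and $x^0$ with $\mathcal{L}_\varphi(x^0)$ bounded and $f$ twice uniformly Lipschitz continuously differentiable on an open neighborhood of it; assume $\varphi$ has a minimizer. Let $\{x^k\}$ be generated by FPGN2CM (described in the context). Then there exists $K\in\mathbb{N}$ such that the Newton-CG step is invoked for all $k\ge K$.
   Context: $\mathcal{G}_t(x):=t(x-\mathrm{prox}_{\frac\lambda t\|\cdot\|_1}(x-\frac1t\nabla f(x)))$; $\mathrm{sgn}(0)=1$. For $x$: $I^\varepsilon_0=\{i:|x_i|\le\varepsilon_g^{1/2}\}$, $I^\varepsilon_{\neq0}=\{i:|x_i|>\varepsilon_g^{1/2}\}$; $g^\varepsilon(x)_i=(\nabla f(x))_i+\lambda$ if $x_i>\varepsilon_g^{1/2}$, $(\nabla f(x))_i-\lambda$ if $x_i<-\varepsilon_g^{1/2}$, $(\nabla f(x))_i-\min\{\max\{-\lambda-\varepsilon_g^{3/4},(\nabla f(x))_i\},\lambda+\varepsilon_g^{3/4}\}$ otherwise. Capped CG (inputs symmetric $H$, $g$, $\epsilon$, $\zeta\in(0,1)$, $\delta$, $\bar\tau$, $M\ge0$): $\bar H=H+\bar\tau\|g\|^\delta I$, $\kappa=\frac{M+\bar\tau\|g\|^\delta}\epsilon$, $\hat\zeta=\frac\zeta{3\kappa}$, $\tau=\frac{\sqrt\kappa}{\sqrt\kappa+1}$, $T=\frac{4\kappa^4}{(1-\sqrt\tau)^2}$,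 $y_0=0,r_0=g,p_0=-g$; if $p_0^\top\bar Hp_0<\epsilon\|p_0\|^2$ return $(p_0,\mathrm{NC})$; if $\|Hp_0\|>M\|p_0\|$ update $M$ and $\kappa,\hat\zeta,\tau,T$. Loop: standard CG iteration on $\bar Hy=-g$ ($\alpha_j=\|r_j\|^2/p_j^\top\bar Hp_j$, $y_{j+1}=y_j+\alpha_jp_j$, $r_{j+1}=r_j+\alpha_j\bar Hp_j$, $\beta_{j+1}=\|r_{j+1}\|^2/\|r_j\|^2$, $p_{j+1}=-r_{j+1}+\beta_{j+1}p_j$, $j\leftarrow j+1$), updating $M$ whenever $\|Hv\|>M\|v\|$ for $v\in\{p_j,y_j,r_j\}$; then if $y_j^\top\bar Hy_j<\epsilon\|y_j\|^2$ return $(y_j,\mathrm{NC})$; elif $\|r_j\|\le\hat\zeta\|r_0\|$ return $(y_j,\mathrm{SOL})$; elif $p_j^\top\bar Hp_j<\epsilon\|p_j\|^2$ return $(p_j,\mathrm{NC})$; elif $\|r_j\|>\sqrt T\tau^{j/2}\|r_0\|$, compute $y_{j+1}$, find $i<j$ with $(y_{j+1}-y_i)^\top\bar H(y_{j+1}-y_i)<\epsilon\|y_{j+1}-y_i\|^2$ and return $(y_{j+1}-y_i,\mathrm{NC})$. FPGN2CM (parameters $0<\varepsilon_g<1$, $\varepsilon_h=\varepsilon_g^{1/2}$, $\beta>1$, $\delta\in[0,1]$, $\hat\tau\ge1$, $\zeta\in(0,1)$, $\bar\eta\in(0,1)$, $\eta\in(0,\frac{1-\zeta}2)$, $\theta\in(0,1)$),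 at iteration $k$ with $I^{k\varepsilon}_0=I^\varepsilon_0(x^k)$, $I^{k\varepsilon}_{\neq0}=I^\varepsilon_{\neq0}(x^k)$: (a) proximal gradient step: if $I^{k\varepsilon}_0\neq\emptyset$ and $g^\varepsilon(x^k)_i\neq0$ for some $i\in I^{k\varepsilon}_0$, set $x^{k+1}=\mathrm{prox}_{\frac\lambda{\beta^{j_k}}\|\cdot\|_1}(x^k-\beta^{-j_k}\nabla f(x^k))$ with $j_k$ the smallest nonnegative $j$ such that $\varphi(\mathrm{prox}_{\frac\lambda{\beta^j}\|\cdot\|_1}(x^k-\beta^{-j}\nabla f(x^k)))<\varphi(x^k)-\frac{\bar\eta}{\beta^j}\|\mathcal{G}_{\beta^j}(x^k)\|^2$; (b) Newton-CG step: else if $I^{k\varepsilon}_{\neq0}\neq\emptyset$ and $\|g^\varepsilon(x^k)_{I^{k\varepsilon}_{\neq0}}\|\neq0$: with $H=(\nabla^2f(x^k))_{I^{k\varepsilon}_{\neq0}}$, $g=g^\varepsilon(x^k)_{I^{k\varepsilon}_{\neq0}}$, $\tau_k\in[\frac{2\varepsilon_h}{\|g\|^\delta},\frac{2\hat\tau\varepsilon_h}{\|g\|^\delta}]$, call Capped CG$(H,g,\varepsilon_h,\zeta,\delta,\tau_k,M)$ to get $(d,d_{\rm type})$; $d^k=0$ on $I^{k\varepsilon}_0$, and on $I^{k\varepsilon}_{\neq0}$ equals $-\mathrm{sgn}(d^\top g)\frac{|d^\top Hd|}{\|d\|^2}\frac d{\|d\|}$ if NC, $d$ if SOL; $x^{k+1}=x^k+\theta^{j_k}d^k$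 with $j_k$ the smallest nonnegative $j$ such that $\varphi(x^k+\theta^jd^k)<\varphi(x^k)-\eta\theta^{2j}\varepsilon_h\|d^k\|^2$. (No second-order phase is performed.) *)

theory Defs
  imports "HOL-Analysis.Analysis"
begin

definition l1norm :: "real^'n \<Rightarrow> real" where
  "l1norm x = (\<Sum>i\<in>UNIV. \<bar>x$i\<bar>)"

definition phi :: "(real^'n \<Rightarrow> real) \<Rightarrow> real \<Rightarrow> real^'n \<Rightarrow> real" where
  "phi f lam x = f x + lam * l1norm x"

definition prox_l1 :: "real \<Rightarrow> real^'n \<Rightarrow> real^'n" where
  "prox_l1 c z = (THE u. \<forall>v. c * l1norm u + (norm (u - z))\<^sup>2 / 2
                              \<le> c * l1norm v + (norm (v - z))\<^sup>2 / 2)"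

definition sgn1 :: "real \<Rightarrow> real" where
  "sgn1 a = (if a \<ge> 0 then 1 else -1)"

definition Gmap :: "real \<Rightarrow> (real^'n \<Rightarrow> real^'n) \<Rightarrow> real \<Rightarrow> real^'n \<Rightarrow> real^'n" where
  "Gmap lam gf t x = t *\<^sub>R (x - prox_l1 (lam / t) (x - (1 / t) *\<^sub>R gf x))"

definition Izero :: "real \<Rightarrow> real^'n \<Rightarrow> 'n set" where
  "Izero eg x = {i. \<bar>x$i\<bar> \<le> sqrt eg}"

definition Inz :: "real \<Rightarrow> real^'n \<Rightarrow> 'n set" where
  "Inz eg x = {i. \<bar>x$i\<bar> > sqrt eg}"

definition geps :: "real \<Rightarrow> real \<Rightarrow> (real^'n \<Rightarrow> real^'n) \<Rightarrow> real^'n \<Rightarrow> real^'n" where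
  "geps lam eg gf x = (\<chi> i.
     if x$i > sqrt eg then gf x $ i + lam
     else if x$i < - sqrt eg then gf x $ i - lam
     else gf x $ i - min (max (- lam - eg powr (3/4)) (gf x $ i)) (lam + eg powr (3/4)))"

text \<open>Subvectors indexed by I are represented as vectors of real^'n vanishing off I.\<close>
definition restr :: "'n set \<Rightarrow> real^'n \<Rightarrow> real^'n" where
  "restr I v = (\<chi> i. if i \<in> I then v$i else 0)"

datatype cg_type = NC | SOL

text \<open>CG iterates (y_j, r_j, p_j) for the system Hbar y = -g.\<close>
fun cg_iter :: "(real^'n \<Rightarrow> real^'n) \<Rightarrow> real^'n \<Rightarrow> nat \<Rightarrow> (real^'n) \<times> (real^'n) \<times> (real^'n)" where
  "cg_iter Hb g 0 = (0, g, - g)"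
| "cg_iter Hb g (Suc j) =
     (case cg_iter Hb g j of (y, r, p) \<Rightarrow>
       (let \<alpha> = (norm r)\<^sup>2 / (p \<bullet> Hb p);
            y' = y + \<alpha> *\<^sub>R p;
            r' = r + \<alpha> *\<^sub>R Hb p;
            \<beta> = (norm r')\<^sup>2 / (norm r)\<^sup>2;
            p' = - r' + \<beta> *\<^sub>R p
        in (y', r', p')))"

definition updM :: "(real^'n \<Rightarrow> real^'n) \<Rightarrow> real \<Rightarrow> real^'n \<Rightarrow> real" where
  "updM H M v = (if norm (H v) > M * norm v then norm (H v) / norm v else M)"

text \<open>Value of M after iteration j (j = 0: after the check on p_0).\<close>
fun cg_M :: "(real^'n \<Rightarrow> real^'n) \<Rightarrow> (real^'n \<Rightarrow> real^'n) \<Rightarrow> real^'n \<Rightarrow> real \<Rightarrow> nat \<Rightarrow> real" where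
  "cg_M H Hb g M 0 = updM H M (- g)"
| "cg_M H Hb g M (Suc j) =
     (case cg_iter Hb g (Suc j) of (y, r, p) \<Rightarrow>
        updM H (updM H (updM H (cg_M H Hb g M j) p) y) r)"

text \<open>capped_cg H g eps zeta delta taub M d t: (d,t) is a possible output of
  Capped CG(H,g,eps,zeta,delta,taub,M).  The choice of the index i in the last
  branch is nondeterministic.\<close>
definition capped_cg ::
  "(real^'n \<Rightarrow> real^'n) \<Rightarrow> real^'n \<Rightarrow> real \<Rightarrow> real \<Rightarrow> real \<Rightarrow> real \<Rightarrow> real
     \<Rightarrow> real^'n \<Rightarrow> cg_type \<Rightarrow> bool" where
  "capped_cg H g eps zeta delta taub M d t \<longleftrightarrow>
   (let c = taub * norm g powr delta;
        Hb = (\<lambda>v. H v + c *\<^sub>R v);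
        Y = (\<lambda>j. fst (cg_iter Hb g j));
        R = (\<lambda>j. fst (snd (cg_iter Hb g j)));
        P = (\<lambda>j. snd (snd (cg_iter Hb g j)));
        Mj = cg_M H Hb g M;
        \<kappa> = (\<lambda>j. (Mj j + c) / eps);
        zh = (\<lambda>j. zeta / (3 * \<kappa> j));
        \<tau> = (\<lambda>j. sqrt (\<kappa> j) / (sqrt (\<kappa> j) + 1));
        T = (\<lambda>j. 4 * (\<kappa> j)^4 / (1 - sqrt (\<tau> j))\<^sup>2);
        negc = (\<lambda>v. v \<bullet> Hb v < eps * (norm v)\<^sup>2);
        t4 = (\<lambda>j. norm (R j) > sqrt (T j) * (\<tau> j) powr (real j / 2) * norm (R 0));
        stop = (\<lambda>j. negc (Y j) \<or> norm (R j) \<le> zh j * norm (R 0) \<or> negc (P j) \<or> t4 j)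
    in if negc (P 0) then d = P 0 \<and> t = NC
       else (\<exists>j\<ge>1. (\<forall>i\<in>{1..<j}. \<not> stop i) \<and>
              (if negc (Y j) then d = Y j \<and> t = NC
               else if norm (R j) \<le> zh j * norm (R 0) then d = Y j \<and> t = SOL
               else if negc (P j) then d = P j \<and> t = NC
               else t4 j \<and> t = NC \<and>
                    (\<exists>i<j. negc (Y (Suc j) - Y i) \<and> d = Y (Suc j) - Y i))))"

definition cond_a :: "real \<Rightarrow> real \<Rightarrow> (real^'n \<Rightarrow> real^'n) \<Rightarrow> real^'n \<Rightarrow> bool" where
  "cond_a lam eg gf x \<longleftrightarrow> Izero eg x \<noteq> {} \<and> (\<exists>i\<in>Izero eg x. geps lam eg gf x $ i \<noteq> 0)"

definition cond_b :: "real \<Rightarrow> real \<Rightarrow> (real^'n \<Rightarrow> real^'n) \<Rightarrow> real^'n \<Rightarrow> bool" where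
  "cond_b lam eg gf x \<longleftrightarrow> Inz eg x \<noteq> {} \<and> norm (restr (Inz eg x) (geps lam eg gf x)) \<noteq> 0"

definition pg_step ::
  "(real^'n \<Rightarrow> real) \<Rightarrow> real \<Rightarrow> (real^'n \<Rightarrow> real^'n) \<Rightarrow> real \<Rightarrow> real
     \<Rightarrow> real^'n \<Rightarrow> real^'n \<Rightarrow> bool" where
  "pg_step f lam gf beta etab x x' \<longleftrightarrow>
   (let tr = (\<lambda>j::nat. prox_l1 (lam / beta^j) (x - (1 / beta^j) *\<^sub>R gf x));
        ok = (\<lambda>j::nat. phi f lam (tr j) < phi f lam x - etab / beta^j * (norm (Gmap lam gf (beta^j) x))\<^sup>2)
    in \<exists>j. ok j \<and> (\<forall>i<j. \<not> ok i) \<and> x' = tr j)"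

definition ncg_step ::
  "(real^'n \<Rightarrow> real) \<Rightarrow> real \<Rightarrow> (real^'n \<Rightarrow> real^'n) \<Rightarrow> (real^'n \<Rightarrow> real^'n^'n)
     \<Rightarrow> real \<Rightarrow> real \<Rightarrow> real \<Rightarrow> real \<Rightarrow> real \<Rightarrow> real
     \<Rightarrow> real^'n \<Rightarrow> real^'n \<Rightarrow> bool" where
  "ncg_step f lam gf Hf eg delta tauh zeta eta theta x x' \<longleftrightarrow>
   (let eh = sqrt eg;
        I = Inz eg x;
        g = restr I (geps lam eg gf x);
        H = (\<lambda>v. restr I (Hf x *v v))
    in \<exists>tk M d t.
         2 * eh / norm g powr delta \<le> tk \<and> tk \<le> 2 * tauh * eh / norm g powr delta \<and>
         M \<ge> 0 \<and> capped_cg H g eh zeta delta tk M d t \<and>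
         (let dk = restr I (if t = NC
                            then (- sgn1 (d \<bullet> g) * \<bar>d \<bullet> H d\<bar> / (norm d)\<^sup>2 / norm d) *\<^sub>R d
                            else d);
              ok = (\<lambda>j::nat. phi f lam (x + theta^j *\<^sub>R dk)
                              < phi f lam x - eta * theta^(2*j) * eh * (norm dk)\<^sup>2)
          in \<exists>j. ok j \<and> (\<forall>i<j. \<not> ok i) \<and> x' = x + theta^j *\<^sub>R dk))"

text \<open>A sequence generated by FPGN2CM.  If neither step applies, the
  algorithm stops; we model this by keeping the iterate fixed.\<close>
definition fpgn2cm_seq ::
  "(real^'n \<Rightarrow> real) \<Rightarrow> real \<Rightarrow> (real^'n \<Rightarrow> real^'n) \<Rightarrow> (real^'n \<Rightarrow> real^'n^'n)
     \<Rightarrow> real \<Rightarrow> real \<Rightarrow> real \<Rightarrow> real \<Rightarrow> real \<Rightarrow> real \<Rightarrow> real \<Rightarrow> real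
     \<Rightarrow> real^'n \<Rightarrow> (nat \<Rightarrow> real^'n) \<Rightarrow> bool" where
  "fpgn2cm_seq f lam gf Hf eg beta delta tauh zeta etab eta theta x0 xs \<longleftrightarrow>
   xs 0 = x0 \<and>
   (\<forall>k. if cond_a lam eg gf (xs k) then pg_step f lam gf beta etab (xs k) (xs (Suc k))
        else if cond_b lam eg gf (xs k)
          then ncg_step f lam gf Hf eg delta tauh zeta eta theta (xs k) (xs (Suc k))
        else xs (Suc k) = xs k)"

end

theory Submission
  imports Defs
begin

definition soft :: "real \<Rightarrow> real \<Rightarrow> real" where
  "soft c z = (if z > c then z - c else if z < - c then z + c else 0)"

lemma soft_sc:
  assumes "c \<ge> 0"
  shows "c * \<bar>soft c z\<bar> + (soft c z - z)\<^sup>2 / 2 + (v - soft c z)\<^sup>2 / 2 \<le> c * \<bar>v\<bar> + (v - z)\<^sup>2 / 2"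
proof (cases "z > c")
  case True
  have e: "c * \<bar>soft c z\<bar> + (soft c z - z)\<^sup>2 / 2 + (v - soft c z)\<^sup>2 / 2 = c * v + (v - z)\<^sup>2 / 2"
    using True assms unfolding soft_def by (simp add: power2_eq_square field_simps)
  have "c * v \<le> c * \<bar>v\<bar>" using assms by (simp add: mult_left_mono)
  then show ?thesis using e by linarith
next
  case F: False
  show ?thesis
  proof (cases "z < -c")
    case True
    have e: "c * \<bar>soft c z\<bar> + (soft c z - z)\<^sup>2 / 2 + (v - soft c z)\<^sup>2 / 2 = - c * v + (v - z)\<^sup>2 / 2"
      using True assms unfolding soft_def by (simp add: power2_eq_square field_simps)
    have "- c * v \<le> c * \<bar>v\<bar>" using assms mult_left_mono[of "-v" "\<bar>v\<bar>" c] by simp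
    then show ?thesis using e by linarith
  next
    case False
    have "v * z \<le> \<bar>v\<bar> * \<bar>z\<bar>" by (metis abs_ge_self abs_mult)
    also have "\<dots> \<le> \<bar>v\<bar> * c" using F False by (intro mult_left_mono) auto
    finally have "v * z \<le> c * \<bar>v\<bar>" by (simp add: mult.commute)
    then show ?thesis using F False unfolding soft_def by (simp add: power2_eq_square field_simps)
  qed
qed

lemma norm_sq_sum: "(norm (x::real^'n))\<^sup>2 = (\<Sum>k\<in>UNIV. (x$k)\<^sup>2)"
  by (simp only: power2_norm_eq_inner) (simp add: inner_vec_def power2_eq_square)

lemma soft_scale: assumes "t > 0" shows "t * soft (lam / t) z = soft lam (t * z)"
  using assms unfolding soft_def
  by (auto simp: field_simps)


lemma prox_eq:
  assumes c: "c > 0"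
  shows "prox_l1 c z = (\<chi> k. soft c (z$k))"
proof -
  define s where "s = (\<chi> k. soft c (z$k))"
  have key: "c * l1norm s + (norm (s - z))\<^sup>2 / 2 + (norm (v - s))\<^sup>2 / 2 \<le> c * l1norm v + (norm (v - z))\<^sup>2 / 2" for v
  proof -
    have "c * l1norm s + (norm (s - z))\<^sup>2 / 2 + (norm (v - s))\<^sup>2 / 2
        = (\<Sum>k\<in>UNIV. c * \<bar>soft c (z$k)\<bar> + (soft c (z$k) - z$k)\<^sup>2 / 2 + (v$k - soft c (z$k))\<^sup>2 / 2)"
      by (simp add: l1norm_def norm_sq_sum s_def sum.distrib sum_distrib_left sum_divide_distrib)
    also have "\<dots> \<le> (\<Sum>k\<in>UNIV. c * \<bar>v$k\<bar> + (v$k - z$k)\<^sup>2 / 2)"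
      by (rule sum_mono) (use soft_sc c in auto)
    also have "\<dots> = c * l1norm v + (norm (v - z))\<^sup>2 / 2"
      by (simp add: l1norm_def norm_sq_sum sum.distrib sum_distrib_left sum_divide_distrib)
    finally show ?thesis .
  qed
  show ?thesis unfolding prox_l1_def s_def[symmetric]
  proof (rule the_equality)
    show "\<forall>v. c * l1norm s + (norm (s - z))\<^sup>2 / 2 \<le> c * l1norm v + (norm (v - z))\<^sup>2 / 2"
    proof
      fix v show "c * l1norm s + (norm (s - z))\<^sup>2 / 2 \<le> c * l1norm v + (norm (v - z))\<^sup>2 / 2"
        using key[of v] zero_le_power2[of "norm (v - s)"] by linarith
    qed
  next
    fix u assume "\<forall>v. c * l1norm u + (norm (u - z))\<^sup>2 / 2 \<le> c * l1norm v + (norm (v - z))\<^sup>2 / 2"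
    then have "c * l1norm u + (norm (u - z))\<^sup>2 / 2 \<le> c * l1norm s + (norm (s - z))\<^sup>2 / 2" by blast
    with key[of u] have "(norm (u - s))\<^sup>2 \<le> 0" by linarith
    then show "u = s" by simp
  qed
qed

lemma descent1:
  assumes t: "t > 0" and lam: "lam \<ge> 0"
  shows "g * (soft (lam/t) (x - g/t) - x) + lam * \<bar>soft (lam/t) (x - g/t)\<bar> - lam * \<bar>x\<bar>
         \<le> - t * (soft (lam/t) (x - g/t) - x)\<^sup>2"
proof -
  define u where "u = soft (lam/t) (x - g/t)"
  define d where "d = u - x"
  have h: "(lam/t) * \<bar>u\<bar> + (u - (x - g/t))\<^sup>2 / 2 + (x - u)\<^sup>2 / 2 \<le> (lam/t) * \<bar>x\<bar> + (x - (x - g/t))\<^sup>2 / 2"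
    unfolding u_def by (rule soft_sc) (use t lam in simp)
  have e1: "(u - (x - g/t))\<^sup>2 = d\<^sup>2 + 2 * d * g / t + (g/t)\<^sup>2" unfolding d_def
    using t by (simp add: power2_eq_square field_simps)
  have e2: "(x - u)\<^sup>2 = d\<^sup>2" unfolding d_def by (simp add: power2_eq_square algebra_simps)
  have e3: "2 * d * g / t = 2 * (d * g / t)" by simp
  have e4: "x - (x - g/t) = g/t" by simp
  have h2: "(lam/t) * \<bar>u\<bar> + (d\<^sup>2 + 2 * d * g / t + (g/t)\<^sup>2) / 2 + d\<^sup>2 / 2 \<le> (lam/t) * \<bar>x\<bar> + (g/t)\<^sup>2 / 2"
    using h by (simp only: e1 e2 e4)
  have lin: "A + (D + B2 + C)/2 + D/2 \<le> E + C/2 \<Longrightarrow> B2 = 2 * B \<Longrightarrow> A + D + B \<le> E" for A B B2 C D E :: real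
    by (simp add: field_simps)
  from lin[OF h2 e3] have "(lam/t) * \<bar>u\<bar> + d\<^sup>2 + d * g / t \<le> (lam/t) * \<bar>x\<bar>" .
  then have "t * ((lam/t) * \<bar>u\<bar> + d\<^sup>2 + d * g / t) \<le> t * ((lam/t) * \<bar>x\<bar>)"
    by (rule mult_left_mono) (use t in auto)
  moreover have "t * ((lam/t) * \<bar>u\<bar> + d\<^sup>2 + d * g / t) = lam * \<bar>u\<bar> + t * d\<^sup>2 + d * g"
    using t by (simp add: ring_distribs)
  moreover have "t * ((lam/t) * \<bar>x\<bar>) = lam * \<bar>x\<bar>" using t by simp
  ultimately have "lam * \<bar>u\<bar> + t * d\<^sup>2 + d * g \<le> lam * \<bar>x\<bar>" by linarith
  then show ?thesis unfolding u_def[symmetric] d_def[symmetric] using mult.commute[of g d] by linarith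
qed

lemma Gmap_comp:
  assumes t: "t > 0" and lam: "lam > 0"
  shows "Gmap lam gf t x $ k = t * x$k - soft lam (t * x$k - gf x $ k)"
proof -
  have "lam / t > 0" using t lam by simp
  then have "Gmap lam gf t x $ k = t * (x$k - soft (lam/t) (x$k - gf x $ k / t))"
    by (simp add: Gmap_def prox_eq)
  also have "\<dots> = t * x$k - t * soft (lam/t) (x$k - gf x $ k / t)" by (simp add: algebra_simps)
  also have "t * soft (lam/t) (x$k - gf x $ k / t) = soft lam (t * (x$k - gf x $ k / t))"
    by (rule soft_scale[OF t])
  also have "t * (x$k - gf x $ k / t) = t * x$k - gf x $ k" using t by (simp add: field_simps)
  finally show ?thesis .
qed

lemma soft_lb: assumes "lam \<ge> 0" shows "\<bar>w - soft lam (w - g)\<bar> \<ge> \<bar>g\<bar> - lam"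
proof -
  consider "w - g > lam" | "w - g < - lam" | "\<bar>w - g\<bar> \<le> lam" by linarith
  then show ?thesis
  proof cases
    case 1 then show ?thesis using assms by (simp add: soft_def)
  next
    case 2 then show ?thesis using assms by (simp add: soft_def)
  next
    case 3 then have "soft lam (w - g) = 0" by (simp add: soft_def abs_le_iff)
    then show ?thesis using 3 by linarith
  qed
qed


lemma soft_close: assumes "c \<ge> 0" shows "\<bar>soft c z - z\<bar> \<le> c"
  using assms unfolding soft_def by auto

lemma descent_f:
  fixes f :: "real^'n \<Rightarrow> real"
  assumes grad: "\<And>x. (f has_derivative (\<lambda>h. gf x \<bullet> h)) (at x)"
    and seg: "\<And>s. 0 \<le> s \<Longrightarrow> s \<le> 1 \<Longrightarrow> x + s *\<^sub>R d \<in> U"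
    and lip: "\<forall>a\<in>U. \<forall>b\<in>U. norm (gf a - gf b) \<le> L * norm (a - b)" and L: "L \<ge> 0"
  shows "f (x + d) \<le> f x + gf x \<bullet> d + L * (norm d)\<^sup>2"
proof -
  define p where "p s = f (x + s *\<^sub>R d)" for s
  have der: "DERIV p s :> gf (x + s *\<^sub>R d) \<bullet> d" for s
  proof -
    have "((\<lambda>s. x + s *\<^sub>R d) has_derivative (\<lambda>h. h *\<^sub>R d)) (at s)"
      by (auto intro!: derivative_eq_intros)
    from has_derivative_compose[OF this grad]
    have "(p has_derivative (\<lambda>h. gf (x + s *\<^sub>R d) \<bullet> (h *\<^sub>R d))) (at s)" unfolding p_def .
    then show ?thesis unfolding has_field_derivative_def
      by (rule has_derivative_eq_rhs) (auto simp: fun_eq_iff)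
  qed
  obtain z where z: "0 < z" "z < 1" "p 1 - p 0 = (1 - 0) * (gf (x + z *\<^sub>R d) \<bullet> d)"
    using MVT2[of 0 1 p "\<lambda>s. gf (x + s *\<^sub>R d) \<bullet> d"] der by auto
  have xU: "x \<in> U" using seg[of 0] by simp
  have zU: "x + z *\<^sub>R d \<in> U" using seg[of z] z by simp
  have "gf (x + z *\<^sub>R d) \<bullet> d - gf x \<bullet> d = (gf (x + z *\<^sub>R d) - gf x) \<bullet> d"
    by (simp add: inner_diff_left)
  also have "\<dots> \<le> norm (gf (x + z *\<^sub>R d) - gf x) * norm d" by (rule norm_cauchy_schwarz)
  also have "\<dots> \<le> (L * norm (z *\<^sub>R d)) * norm d"
    using lip xU zU by (intro mult_right_mono) (metis add_diff_cancel_left', simp)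
  also have "\<dots> \<le> (L * norm d) * norm d"
    using z L mult_right_mono[of z 1 "norm d"] by (intro mult_right_mono mult_left_mono) auto
  finally have "gf (x + z *\<^sub>R d) \<bullet> d - gf x \<bullet> d \<le> L * (norm d)\<^sup>2" by (simp add: power2_eq_square mult.assoc)
  moreover have "p 1 = f (x + d)" "p 0 = f x" by (simp_all add: p_def)
  ultimately show ?thesis using z(3) by simp
qed


lemma geps_big:
  assumes i: "i \<in> Izero eg x" and ne: "geps lam eg gf x $ i \<noteq> 0" and lam: "lam > 0" and eg: "eg > 0"
  shows "\<bar>gf x $ i\<bar> > lam + eg powr (3/4)"
proof (rule ccontr)
  assume a: "\<not> ?thesis"
  have e: "eg powr (3/4) > 0" using eg by simp
  from i have xi: "\<not> x$i > sqrt eg" "\<not> x$i < - sqrt eg" unfolding Izero_def by auto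
  have "geps lam eg gf x $ i = gf x $ i - min (max (- lam - eg powr (3/4)) (gf x $ i)) (lam + eg powr (3/4))"
    using xi unfolding geps_def by simp
  also have "\<dots> = 0" using a by (auto simp: abs_le_iff min_def max_def)
  finally show False using ne by simp
qed

lemma pg_decrease:
  fixes x :: "real^'n" and f :: "real^'n \<Rightarrow> real"
  assumes lam: "lam > 0"
    and grad: "\<And>x. (f has_derivative (\<lambda>h. gf x \<bullet> h)) (at x)"
    and lip: "\<forall>a\<in>U. \<forall>b\<in>U. norm (gf a - gf b) \<le> L * norm (a - b)" and L: "L \<ge> 0"
    and r: "r > 0" and ball: "cball x r \<subseteq> U" and B: "norm (gf x) \<le> B"
    and beta: "beta > 1" and etab: "0 < etab" "etab < 1" and eg: "eg > 0"
    and J1: "real CARD('n) * (B + lam) / r \<le> beta^J" and J2: "(L + 1) / (1 - etab) \<le> beta^J"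
    and ca: "cond_a lam eg gf x" and pg: "pg_step f lam gf beta etab x x'"
  shows "phi f lam x' \<le> phi f lam x - etab * (eg powr (3/4))\<^sup>2 / beta^J"
proof -
  define e where "e = eg powr (3/4)"
  have e: "e > 0" using eg by (simp add: e_def)
  from ca obtain i where i: "i \<in> Izero eg x" "geps lam eg gf x $ i \<noteq> 0" unfolding cond_a_def by blast
  have gi: "\<bar>gf x $ i\<bar> > lam + e" using geps_big[OF i lam eg] e_def by simp
  have Gb: "e\<^sup>2 < (norm (Gmap lam gf t x))\<^sup>2" if t: "t > 0" for t
  proof -
    have "e < \<bar>t * x$i - soft lam (t * x$i - gf x $ i)\<bar>"
      using soft_lb[where lam=lam and w="t * x$i" and g="gf x $ i"] gi lam by linarith
    also have "\<dots> = \<bar>Gmap lam gf t x $ i\<bar>" by (subst Gmap_comp[OF t lam]) (rule refl)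
    also have "\<dots> \<le> norm (Gmap lam gf t x)" by (rule component_le_norm_cart)
    finally show ?thesis using e by (intro power_strict_mono) auto
  qed
  define tr where "tr j = prox_l1 (lam / beta^j) (x - (1 / beta^j) *\<^sub>R gf x)" for j :: nat
  define ok where "ok j = (phi f lam (tr j) < phi f lam x - etab / beta^j * (norm (Gmap lam gf (beta^j) x))\<^sup>2)" for j :: nat
  have okJ: "ok J"
  proof -
    define t where "t = beta^J"
    have t0: "t > 0" using beta by (simp add: t_def)
    have t1: "L + 1 \<le> t * (1 - etab)" using J2 etab by (simp add: t_def pos_divide_le_eq)
    have t2: "real CARD('n) * (B + lam) \<le> r * t" using J1 r by (simp add: t_def pos_divide_le_eq mult.commute)
    define d where "d = tr J - x"
    have ct: "lam / t > 0" using lam t0 by simp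
    have trk: "tr J $ k = soft (lam/t) (x$k - gf x $ k / t)" for k
      unfolding tr_def t_def[symmetric] by (simp add: prox_eq[OF ct])
    have dk: "d $ k = soft (lam/t) (x$k - gf x $ k / t) - x$k" for k
      using trk by (simp add: d_def)
    have Geq: "Gmap lam gf t x = (- t) *\<^sub>R d"
      unfolding Gmap_def d_def tr_def t_def by (simp add: algebra_simps)
    have dabs: "\<bar>d$k\<bar> \<le> (B + lam) / t" for k
    proof -
      have "\<bar>d$k\<bar> \<le> \<bar>soft (lam/t) (x$k - gf x $ k / t) - (x$k - gf x $ k / t)\<bar> + \<bar>gf x $ k / t\<bar>"
        unfolding dk by linarith
      also have "\<dots> \<le> lam / t + \<bar>gf x $ k\<bar> / t"
        using soft_close[of "lam/t"] ct t0 by (intro add_mono) auto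
      also have "\<bar>gf x $ k\<bar> \<le> B" using component_le_norm_cart[of "gf x" k] B by linarith
      then have "lam / t + \<bar>gf x $ k\<bar> / t \<le> (B + lam) / t" using t0 by (simp add: divide_right_mono add_divide_distrib)
      finally show ?thesis .
    qed
    have nd: "norm d \<le> r"
    proof -
      have "norm d \<le> (\<Sum>k\<in>UNIV. \<bar>d$k\<bar>)" by (rule norm_le_l1_cart)
      also have "\<dots> \<le> (\<Sum>k\<in>(UNIV::'n set). (B + lam) / t)" by (rule sum_mono) (rule dabs)
      also have "\<dots> = real CARD('n) * (B + lam) / t" by simp
      also have "\<dots> \<le> r" using t2 t0 by (simp add: pos_divide_le_eq)
      finally show ?thesis .
    qed
    have seg: "x + s *\<^sub>R d \<in> U" if "0 \<le> s" "s \<le> 1" for s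
    proof -
      have "norm (s *\<^sub>R d) \<le> r" using that nd mult_right_mono[of s 1 "norm d"] by auto
      then have "x + s *\<^sub>R d \<in> cball x r" by (simp add: dist_norm)
      then show ?thesis using ball by blast
    qed
    have trx: "tr J = x + d" by (simp add: d_def)
    have fd: "f (tr J) \<le> f x + gf x \<bullet> d + L * (norm d)\<^sup>2"
      unfolding trx by (rule descent_f[OF grad seg lip L])
    have l1: "gf x \<bullet> d + lam * l1norm (tr J) - lam * l1norm x \<le> - t * (norm d)\<^sup>2"
    proof -
      have "gf x \<bullet> d + lam * l1norm (tr J) - lam * l1norm x
          = (\<Sum>k\<in>UNIV. gf x $ k * (soft (lam/t) (x$k - gf x $ k / t) - x$k)
               + lam * \<bar>soft (lam/t) (x$k - gf x $ k / t)\<bar> - lam * \<bar>x$k\<bar>)"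
        by (simp add: inner_vec_def l1norm_def trk dk sum.distrib sum_subtractf sum_distrib_left)
      also have "\<dots> \<le> (\<Sum>k\<in>UNIV. - t * (soft (lam/t) (x$k - gf x $ k / t) - x$k)\<^sup>2)"
        by (rule sum_mono) (rule descent1[OF t0], use lam in simp)
      also have "\<dots> = - t * (norm d)\<^sup>2"
        by (simp add: norm_sq_sum dk sum_distrib_left)
      finally show ?thesis .
    qed
    have phid: "phi f lam (tr J) \<le> phi f lam x - (t - L) * (norm d)\<^sup>2"
      using fd l1 unfolding phi_def by (simp add: left_diff_distrib)
    have nG: "(norm (Gmap lam gf t x))\<^sup>2 = t\<^sup>2 * (norm d)\<^sup>2"
      unfolding Geq by (simp add: power_mult_distrib)
    have dpos: "(norm d)\<^sup>2 > 0"
    proof (rule ccontr)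
      assume "\<not> (norm d)\<^sup>2 > 0"
      then have "(norm d)\<^sup>2 = 0" by simp
      with nG Gb[OF t0] e show False by simp
    qed
    have pos: "(t - L - etab * t) * (norm d)\<^sup>2 > 0"
      using t1 dpos by (intro mult_pos_pos) (auto simp: algebra_simps)
    have "etab / t * (norm (Gmap lam gf t x))\<^sup>2 = etab * t * (norm d)\<^sup>2"
      unfolding nG using t0 by (simp add: power2_eq_square field_simps)
    then have "phi f lam (tr J) < phi f lam x - etab / t * (norm (Gmap lam gf t x))\<^sup>2"
      using phid pos by (simp add: algebra_simps)
    then show ?thesis unfolding ok_def t_def .
  qed
  from pg obtain j where j: "ok j" "\<forall>i<j. \<not> ok i" "x' = tr j"
    unfolding pg_step_def Let_def tr_def ok_def by blast
  have "j \<le> J" using okJ j(2) by (meson not_le)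
  then have bj: "beta^j \<le> beta^J" using beta by (intro power_increasing) auto
  have bj0: "beta^j > 0" using beta by simp
  have "etab * e\<^sup>2 / beta^J \<le> etab * e\<^sup>2 / beta^j"
    using bj bj0 etab by (intro divide_left_mono) auto
  also have "\<dots> \<le> etab * (norm (Gmap lam gf (beta^j) x))\<^sup>2 / beta^j"
    using Gb[OF bj0] etab bj0 by (intro divide_right_mono mult_left_mono) auto
  finally have "etab * e\<^sup>2 / beta^J \<le> etab / beta^j * (norm (Gmap lam gf (beta^j) x))\<^sup>2" by simp
  with j(1) show ?thesis unfolding ok_def e_def j(3) by linarith
qed


lemma ncg_mono:
  assumes st: "ncg_step f lam gf Hf eg delta tauh zeta eta theta x x'"
    and eta: "eta > 0" and theta: "theta > 0" and eg: "eg > 0"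
  shows "phi f lam x' \<le> phi f lam x"
proof -
  from st obtain j dk where h: "phi f lam (x + theta^j *\<^sub>R dk) < phi f lam x - eta * theta^(2*j) * sqrt eg * (norm dk)\<^sup>2"
    "x' = x + theta^j *\<^sub>R dk"
    unfolding ncg_step_def Let_def by blast
  have "0 \<le> eta * theta^(2*j) * sqrt eg * (norm dk)\<^sup>2" using eta theta eg by simp
  then show ?thesis using h by simp
qed

lemma pg_mono:
  assumes st: "pg_step f lam gf beta etab x x'" and etab: "etab > 0" and beta: "beta > 0"
  shows "phi f lam x' \<le> phi f lam x"
proof -
  from st obtain j where h: "phi f lam x' < phi f lam x - etab / beta^j * (norm (Gmap lam gf (beta^j) x))\<^sup>2"
    unfolding pg_step_def Let_def by blast
  have "0 \<le> etab / beta^j * (norm (Gmap lam gf (beta^j) x))\<^sup>2" using etab beta by simp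
  then show ?thesis using h by simp
qed

theorem lemma12:
  fixes f :: "real^'n \<Rightarrow> real"
    and gf :: "real^'n \<Rightarrow> real^'n"
    and Hf :: "real^'n \<Rightarrow> real^'n^'n"
    and lam eg beta delta tauh zeta etab eta theta :: real
    and x0 :: "real^'n"
    and xs :: "nat \<Rightarrow> real^'n"
  assumes lam: "lam > 0"
    and grad: "\<And>x. (f has_derivative (\<lambda>h. gf x \<bullet> h)) (at x)"
    and hess: "\<And>x. (gf has_derivative (\<lambda>h. Hf x *v h)) (at x)"
    and hess_cont: "continuous_on UNIV Hf"
    and level_bdd: "bounded {x. phi f lam x \<le> phi f lam x0}"
    and lip: "\<exists>U L. open U \<and> {x. phi f lam x \<le> phi f lam x0} \<subseteq> U \<and>
               (\<forall>x\<in>U. \<forall>y\<in>U. norm (gf x - gf y) \<le> L * norm (x - y) \<and>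
                               norm (Hf x - Hf y) \<le> L * norm (x - y))"
    and minimizer: "\<exists>xm. \<forall>x. phi f lam xm \<le> phi f lam x"
    and eg: "0 < eg" "eg < 1"
    and beta: "beta > 1"
    and delta: "0 \<le> delta" "delta \<le> 1"
    and tauh: "tauh \<ge> 1"
    and zeta: "0 < zeta" "zeta < 1"
    and etab: "0 < etab" "etab < 1"
    and eta: "0 < eta" "eta < (1 - zeta) / 2"
    and theta: "0 < theta" "theta < 1"
    and gen: "fpgn2cm_seq f lam gf Hf eg beta delta tauh zeta etab eta theta x0 xs"
  shows "\<exists>K. \<forall>k\<ge>K. \<not> cond_a lam eg gf (xs k)"
proof (rule ccontr)
  assume contra: "\<not> ?thesis"
  then have inf: "\<forall>K. \<exists>k\<ge>K. cond_a lam eg gf (xs k)" by auto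
  define S where "S = {x. phi f lam x \<le> phi f lam x0}"
  have contf: "continuous_on UNIV f"
    using grad has_derivative_continuous continuous_at_imp_continuous_on by blast
  have contgf: "continuous_on UNIV gf"
    using hess has_derivative_continuous continuous_at_imp_continuous_on by blast
  have contphi: "continuous_on UNIV (phi f lam)"
    unfolding phi_def[abs_def] l1norm_def by (intro continuous_intros contf)
  have "closed S" unfolding S_def
    using contphi by (intro closed_Collect_le) (auto intro: continuous_intros)
  then have cS: "compact S" using level_bdd by (simp add: S_def compact_eq_bounded_closed)
  obtain U L where U: "open U" "S \<subseteq> U"
    and LU: "\<forall>a\<in>U. \<forall>b\<in>U. norm (gf a - gf b) \<le> L * norm (a - b)"
    using lip unfolding S_def by blast
  define L' where "L' = max L 0"
  have L': "L' \<ge> 0" "\<forall>a\<in>U. \<forall>b\<in>U. norm (gf a - gf b) \<le> L' * norm (a - b)"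
    using LU unfolding L'_def by (auto intro: order_trans[OF _ mult_right_mono[of L "max L 0"]])
  obtain r where r: "r > 0" "(\<Union>x\<in>S. cball x r) \<subseteq> U"
    using compact_subset_open_imp_cball_epsilon_subset[OF cS U(1) U(2)] by blast
  have "compact (gf ` S)" using cS contgf by (intro compact_continuous_image) (auto intro: continuous_on_subset)
  then have "bounded (gf ` S)" by (rule compact_imp_bounded)
  then obtain B where "\<forall>y\<in>gf ` S. norm y \<le> B" unfolding bounded_iff by blast
  then have B: "\<forall>x\<in>S. norm (gf x) \<le> B" by simp
  obtain J1 where J1: "real CARD('n) * (B + lam) / r < beta^J1" using real_arch_pow[OF beta] by blast
  obtain J2 where J2: "(L' + 1) / (1 - etab) < beta^J2" using real_arch_pow[OF beta] by blast
  define J where "J = max J1 J2"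
  have "beta^J1 \<le> beta^J" "beta^J2 \<le> beta^J" using beta unfolding J_def by (auto intro!: power_increasing)
  with J1 J2 have J1': "real CARD('n) * (B + lam) / r \<le> beta^J" and J2': "(L' + 1) / (1 - etab) \<le> beta^J"
    by linarith+
  define c where "c = etab * (eg powr (3/4))\<^sup>2 / beta^J"
  have c: "c > 0" using etab eg beta by (simp add: c_def)
  have key: "phi f lam x' \<le> phi f lam x - c" if "x \<in> S" "cond_a lam eg gf x" "pg_step f lam gf beta etab x x'" for x x'
  proof -
    have "cball x r \<subseteq> U" using r that(1) by blast
    then show ?thesis unfolding c_def
      using pg_decrease[OF lam grad L'(2) L'(1) r(1) _ B[rule_format, OF that(1)] beta etab eg(1) J1' J2' that(2,3)]
      by blast
  qed
  from gen have xs0: "xs 0 = x0" and st: "\<And>k. if cond_a lam eg gf (xs k) then pg_step f lam gf beta etab (xs k) (xs (Suc k))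
        else if cond_b lam eg gf (xs k)
          then ncg_step f lam gf Hf eg delta tauh zeta eta theta (xs k) (xs (Suc k))
        else xs (Suc k) = xs k"
    unfolding fpgn2cm_seq_def by blast+
  have mono1: "phi f lam (xs (Suc k)) \<le> phi f lam (xs k)" for k
  proof -
    have b0: "beta > 0" using beta by simp
    show ?thesis
    proof (cases "cond_a lam eg gf (xs k)")
      case True
      then show ?thesis using st[of k] pg_mono[OF _ etab(1) b0] by simp
    next
      case False
      then show ?thesis using st[of k] ncg_mono[OF _ eta(1) theta(1) eg(1)]
        by (cases "cond_b lam eg gf (xs k)") auto
    qed
  qed
  have monok: "phi f lam (xs k') \<le> phi f lam (xs k)" if "k \<le> k'" for k k'
    using lift_Suc_antimono_le[of "\<lambda>k. phi f lam (xs k)", OF mono1 that] .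
  have inS: "xs k \<in> S" for k
    using monok[of 0 k] xs0 by (simp add: S_def)
  have down: "\<exists>k. phi f lam (xs k) \<le> phi f lam x0 - real m * c" for m
  proof (induction m)
    case 0 show ?case using xs0 by (intro exI[of _ 0]) simp
  next
    case (Suc m)
    then obtain k where k: "phi f lam (xs k) \<le> phi f lam x0 - real m * c" by blast
    from inf obtain k' where k': "k' \<ge> k" "cond_a lam eg gf (xs k')" by blast
    have "pg_step f lam gf beta etab (xs k') (xs (Suc k'))" using st[of k'] k'(2) by simp
    then have "phi f lam (xs (Suc k')) \<le> phi f lam (xs k') - c" using key inS k'(2) by blast
    moreover have "phi f lam (xs k') \<le> phi f lam (xs k)" using monok k'(1) by blast
    ultimately show ?case using k by (intro exI[of _ "Suc k'"]) (simp add: algebra_simps)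
  qed
  obtain xm where xm: "\<forall>x. phi f lam xm \<le> phi f lam x" using minimizer by blast
  obtain m where m: "phi f lam x0 - phi f lam xm < real m * c"
    using reals_Archimedean3[OF c] by blast
  obtain k where "phi f lam (xs k) \<le> phi f lam x0 - real m * c" using down by blast
  with m xm show False by (smt (verit))
qed

end
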